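(* Let $L$ be a Lie algebra over a field $K$ of characteristic $\neq 2$. The following are equivalent: (i) for any $\varphi,\psi \in \mathrm{HomLie}(L)$, $\frac12(\varphi\circ\psi + \psi\circ\varphi) \in \mathrm{HomLie}(L)$; (ii) for any $\varphi \in \mathrm{HomLie}(L)$, $\varphi^2 \in \mathrm{HomLie}(L)$; (iii) for any $\varphi \in \mathrm{HomLie}(L)$ and any polynomial $f \in K[t]$, $f(\varphi) \in \mathrm{HomLie}(L)$; (iv) for any $\varphi,\psi \in \mathrm{HomLie}(L)$, the bilinear map $F_{\varphi,\psi}: L\times L \to L$, $F_{\varphi,\psi}(x,y) = [\varphi(x),\psi(y)] + [\psi(x),\varphi(y)]$, satisfies $[F_{\varphi,\psi}(x,y),z] + [F_{\varphi,\psi}(z,x),y] + [F_{\varphi,\psi}(y,z),x] = 0$ for all $x,y,z \in L$.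
   Context: A Hom-Lie structure on a Lie algebra $L$ is a linear map $\varphi: L \to L$ satisfying $[[x,y],\varphi(z)] + [[z,x],\varphi(y)] + [[y,z],\varphi(x)] = 0$ for all $x,y,z \in L$. $\mathrm{HomLie}(L)$ denotes the vector space of all Hom-Lie structures on $L$; $\circ$ denotes composition of maps. *)

theory Defs
  imports Main "HOL-Computational_Algebra.Polynomial"
begin

definition lie_algebra ::
  "('k::field \<Rightarrow> 'v::ab_group_add \<Rightarrow> 'v) \<Rightarrow> ('v \<Rightarrow> 'v \<Rightarrow> 'v) \<Rightarrow> bool" where
  "lie_algebra sc br \<longleftrightarrow>
     vector_space sc \<and>
     (\<forall>x. Vector_Spaces.linear sc sc (br x)) \<and>
     (\<forall>y. Vector_Spaces.linear sc sc (\<lambda>x. br x y)) \<and>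
     (\<forall>x. br x x = 0) \<and>
     (\<forall>x y z. br x (br y z) + br y (br z x) + br z (br x y) = 0)"

definition HomLie ::
  "('k::field \<Rightarrow> 'v::ab_group_add \<Rightarrow> 'v) \<Rightarrow> ('v \<Rightarrow> 'v \<Rightarrow> 'v) \<Rightarrow> ('v \<Rightarrow> 'v) set" where
  "HomLie sc br = {\<phi>. Vector_Spaces.linear sc sc \<phi> \<and>
     (\<forall>x y z. br (br x y) (\<phi> z) + br (br z x) (\<phi> y) + br (br y z) (\<phi> x) = 0)}"

definition poly_endo ::
  "('k::field \<Rightarrow> 'v::ab_group_add \<Rightarrow> 'v) \<Rightarrow> 'k poly \<Rightarrow> ('v \<Rightarrow> 'v) \<Rightarrow> ('v \<Rightarrow> 'v)" where
  "poly_endo sc f \<phi> = (\<lambda>x. \<Sum>i\<le>degree f. sc (coeff f i) ((\<phi> ^^ i) x))"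

end

theory Submission
  imports Defs
begin

lemma key:
  fixes br :: "'v::ab_group_add \<Rightarrow> 'v \<Rightarrow> 'v" and p q :: "'v \<Rightarrow> 'v"
  assumes flip: "\<And>u v w. br (br u v) w = - br (br v u) w"
  and rot: "\<And>u v w. br (br u v) w = br (br w v) u - br (br w u) v"
  shows "br (br (p x) (q y)) (z) + br (br (q x) (p y)) (z) + br (br (p y) (q z)) (x) + br (br (q y) (p z)) (x) + br (br (p z) (q x)) (y) + br (br (q z) (p x)) (y) =
   br (br (x) (y)) (p (q z)) + br (br (z) (x)) (p (q y)) + br (br (y) (z)) (p (q x)) + br (br (x) (y)) (q (p z)) + br (br (z) (x)) (q (p y)) + br (br (y) (z)) (q (p x)) - br (br (x) (y)) (p (q z)) - br (br (q z) (x)) (p y) - br (br (y) (q z)) (p x) - br (br (x) (q y)) (p z) - br (br (z) (x)) (p (q y)) - br (br (q y) (z)) (p x) - br (br (q x) (y)) (p z) - br (br (z) (q x)) (p y) - br (br (y) (z)) (p (q x)) - br (br (x) (y)) (q (p z)) - br (br (p z) (x)) (q y) - br (br (y) (p z)) (q x) - br (br (x) (p y)) (q z) - br (br (z) (x)) (q (p y)) - br (br (p y) (z)) (q x) - br (br (p x) (y)) (q z) - br (br (z) (p x)) (q y) - br (br (y) (z)) (q (p x))"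
  apply (simp only: flip[of "q x" "p y" "z"]
    rot[of "q x" "y" "p z"]
    flip[of "q y" "p z" "x"]
    rot[of "q y" "z" "p x"]
    flip[of "q z" "p x" "y"]
    rot[of "q z" "x" "p y"]
    flip[of "x" "p y" "q z"]
    rot[of "x" "q y" "p z"]
    rot[of "x" "y" "p (q z)"]
    rot[of "x" "y" "q (p z)"]
    flip[of "y" "p z" "q x"]
    rot[of "y" "q z" "p x"]
    rot[of "y" "z" "p (q x)"]
    rot[of "y" "z" "q (p x)"]
    flip[of "z" "p x" "q y"]
    rot[of "z" "q x" "p y"]
    rot[of "z" "x" "p (q y)"]
    rot[of "z" "x" "q (p y)"])
  by (simp add: algebra_simps)

definition HC :: "('v \<Rightarrow> 'v \<Rightarrow> 'v::ab_group_add) \<Rightarrow> ('v \<Rightarrow> 'v) \<Rightarrow> 'v \<Rightarrow> 'v \<Rightarrow> 'v \<Rightarrow> 'v" where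
  "HC br f x y z = br (br x y) (f z) + br (br z x) (f y) + br (br y z) (f x)"

context
  fixes sc :: "'k::field \<Rightarrow> 'v::ab_group_add \<Rightarrow> 'v"
    and br :: "'v \<Rightarrow> 'v \<Rightarrow> 'v"
  assumes L: "lie_algebra sc br"
begin

lemma VS: "vector_space sc"
  using L unfolding lie_algebra_def by blast

lemma linR: "Vector_Spaces.linear sc sc (br x)"
  using L unfolding lie_algebra_def by blast

lemma linL: "Vector_Spaces.linear sc sc (\<lambda>x. br x y)"
  using L unfolding lie_algebra_def by blast

lemma addR: "br a (b + c) = br a b + br a c"
  using linR[of a] unfolding Vector_Spaces.linear_iff by blast

lemma addL: "br (a + b) c = br a c + br b c"
  using linL[of c] unfolding Vector_Spaces.linear_iff by blast

lemma scR: "br a (sc k b) = sc k (br a b)"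
  using linR[of a] unfolding Vector_Spaces.linear_iff by blast

lemma scL: "br (sc k a) b = sc k (br a b)"
  using linL[of b] unfolding Vector_Spaces.linear_iff by blast

lemma alt: "br a a = 0"
  using L unfolding lie_algebra_def by blast

lemma jac: "br x (br y z) + br y (br z x) + br z (br x y) = 0"
  using L unfolding lie_algebra_def by blast

lemma zeroR: "br a 0 = 0"
  using addR[of a 0 0] by simp

lemma zeroL: "br 0 a = 0"
  using addL[of 0 0 a] by simp

lemma antisym: "br b a = - br a b"
proof -
  have "0 = br (a + b) (a + b)" by (simp add: alt)
  also have "\<dots> = br a b + br b a" by (simp only: addL addR) (simp add: alt)
  finally have "br a b + br b a = 0" by (rule sym)
  then show ?thesis by (simp add: add_eq_0_iff)
qed

lemma negL: "br (- a) b = - br a b"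
proof -
  have "0 = br (a + - a) b" by (simp add: zeroL)
  also have "\<dots> = br a b + br (- a) b" by (simp only: addL)
  finally have "br a b + br (- a) b = 0" by simp
  then show ?thesis by (simp add: add_eq_0_iff)
qed

lemma negR: "br a (- b) = - br a b"
  using negL[of b a] antisym[of a b] antisym[of a "- b"] by simp

lemma flip: "br (br u v) w = - br (br v u) w"
  using antisym[of v u] negL by simp

lemma rot: "br (br u v) w = br (br w v) u - br (br w u) v"
proof -
  have j: "br w (br u v) + br u (br v w) + br v (br w u) = 0" by (rule jac)
  have "br w (br u v) = - br (br u v) w" by (rule antisym)
  moreover have "br u (br v w) = br (br w v) u" using antisym[of u "br v w"] flip[of v w u] by simp
  moreover have "br v (br w u) = - br (br w u) v" by (rule antisym)
  ultimately have "- br (br u v) w + br (br w v) u + - br (br w u) v = 0" using j by simp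
  then show ?thesis by (simp add: algebra_simps)
qed

lemma MOD: "module sc"
  using VS by (simp add: module_iff_vector_space)

lemma sc_add: "sc k (a + b) = sc k a + sc k b"
  using MOD by (rule module.scale_right_distrib)

lemma sc_ladd: "sc (k + l) a = sc k a + sc l a"
  using MOD by (rule module.scale_left_distrib)

lemma sc_sc: "sc k (sc l a) = sc (k * l) a"
  using MOD by (rule module.scale_scale)

lemma sc_one: "sc 1 a = a"
  using MOD by (rule module.scale_one)

lemma sc_zero: "sc k 0 = 0"
  using MOD by (rule module.scale_zero_right)

lemma sc_zeroL: "sc 0 a = 0"
  using MOD by (rule module.scale_zero_left)

lemma sc_m1: "sc (-1) a = - a"
  using module.scale_minus_left[OF MOD, of 1 a] sc_one by simp

lemma lin_iff: "Vector_Spaces.linear sc sc f \<longleftrightarrow> (\<forall>x y. f (x + y) = f x + f y) \<and> (\<forall>c x. f (sc c x) = sc c (f x))"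
  using VS unfolding Vector_Spaces.linear_iff by blast

lemma lin_add: "Vector_Spaces.linear sc sc f \<Longrightarrow> Vector_Spaces.linear sc sc g \<Longrightarrow> Vector_Spaces.linear sc sc (\<lambda>x. f x + g x)"
  unfolding lin_iff by (simp add: sc_add algebra_simps)

lemma lin_scale: "Vector_Spaces.linear sc sc f \<Longrightarrow> Vector_Spaces.linear sc sc (\<lambda>x. sc k (f x))"
  unfolding lin_iff by (simp add: sc_add sc_sc mult.commute)

lemma lin_zero: "Vector_Spaces.linear sc sc (\<lambda>x. 0)"
  unfolding lin_iff by (simp add: sc_zero)

lemma lin_id: "Vector_Spaces.linear sc sc (\<lambda>x. x)"
  unfolding lin_iff by simp

lemma lin_comp: "Vector_Spaces.linear sc sc f \<Longrightarrow> Vector_Spaces.linear sc sc g \<Longrightarrow> Vector_Spaces.linear sc sc (\<lambda>x. f (g x))"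
  unfolding lin_iff by simp

lemma hl_iff: "f \<in> HomLie sc br \<longleftrightarrow> Vector_Spaces.linear sc sc f \<and> (\<forall>x y z. HC br f x y z = 0)"
  by (simp add: HomLie_def HC_def)

lemma hl_add: "f \<in> HomLie sc br \<Longrightarrow> g \<in> HomLie sc br \<Longrightarrow> (\<lambda>x. f x + g x) \<in> HomLie sc br"
  unfolding hl_iff HC_def
proof (intro conjI allI)
  fix x y z
  assume a: "Vector_Spaces.linear sc sc f \<and> (\<forall>x y z. br (br x y) (f z) + br (br z x) (f y) + br (br y z) (f x) = 0)"
     and b: "Vector_Spaces.linear sc sc g \<and> (\<forall>x y z. br (br x y) (g z) + br (br z x) (g y) + br (br y z) (g x) = 0)"
  then show "Vector_Spaces.linear sc sc (\<lambda>x. f x + g x)" by (simp add: lin_add)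
  have "br (br x y) (f z + g z) + br (br z x) (f y + g y) + br (br y z) (f x + g x) =
    (br (br x y) (f z) + br (br z x) (f y) + br (br y z) (f x)) + (br (br x y) (g z) + br (br z x) (g y) + br (br y z) (g x))"
    by (simp add: addR algebra_simps)
  then show "br (br x y) (f z + g z) + br (br z x) (f y + g y) + br (br y z) (f x + g x) = 0"
    using a b by simp
qed

lemma hl_scale: "f \<in> HomLie sc br \<Longrightarrow> (\<lambda>x. sc k (f x)) \<in> HomLie sc br"
  unfolding hl_iff HC_def
  by (simp add: lin_scale scR flip: sc_add) (simp add: sc_zero)

lemma hl_zero: "(\<lambda>x. 0) \<in> HomLie sc br"
  unfolding hl_iff HC_def by (simp add: lin_zero zeroR)

lemma hl_id: "(\<lambda>x. x) \<in> HomLie sc br"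
proof -
  have "br (br x y) z + br (br z x) y + br (br y z) x = 0" for x y z
  proof -
    have "br (br x y) z + br (br z x) y + br (br y z) x = - (br x (br y z) + br y (br z x) + br z (br x y))"
      by (simp only: antisym[of z "br x y"] antisym[of y "br z x"] antisym[of x "br y z"]) (simp add: algebra_simps)
    then show ?thesis by (simp add: jac)
  qed
  then show ?thesis unfolding hl_iff HC_def by (simp add: lin_id)
qed

lemma hl_sum: "finite I \<Longrightarrow> (\<And>i. i \<in> I \<Longrightarrow> f i \<in> HomLie sc br) \<Longrightarrow> (\<lambda>x. \<Sum>i\<in>I. f i x) \<in> HomLie sc br"
proof (induction I rule: finite_induct)
  case empty
  then show ?case using hl_zero by simp
next
  case (insert a F)
  then have "(\<lambda>x. f a x + (\<Sum>i\<in>F. f i x)) \<in> HomLie sc br"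
    by (intro hl_add) auto
  then show ?case using insert by simp
qed

lemma key2: "br (br (p x) (q y)) z + br (br (q x) (p y)) z + br (br (p y) (q z)) x + br (br (q y) (p z)) x + br (br (p z) (q x)) y + br (br (q z) (p x)) y
  = HC br (\<lambda>v. p (q v) + q (p v)) x y z - HC br p x y (q z) - HC br p x (q y) z - HC br p (q x) y z
    - HC br q x y (p z) - HC br q x (p y) z - HC br q (p x) y z"
  using key[where br=br, OF flip rot]
  unfolding HC_def by (simp add: addR algebra_simps)

end

theorem lemma1p2:
  fixes sc :: "'k::field \<Rightarrow> 'v::ab_group_add \<Rightarrow> 'v"
    and br :: "'v \<Rightarrow> 'v \<Rightarrow> 'v"
  assumes L: "lie_algebra sc br"
    and char: "(2::'k) \<noteq> 0"
  shows
    "((\<forall>\<phi>\<in>HomLie sc br. \<forall>\<psi>\<in>HomLie sc br.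
         (\<lambda>x. sc (1/2) ((\<phi> \<circ> \<psi>) x + (\<psi> \<circ> \<phi>) x)) \<in> HomLie sc br)
      \<longleftrightarrow> (\<forall>\<phi>\<in>HomLie sc br. \<phi> \<circ> \<phi> \<in> HomLie sc br))
   \<and> ((\<forall>\<phi>\<in>HomLie sc br. \<phi> \<circ> \<phi> \<in> HomLie sc br)
      \<longleftrightarrow> (\<forall>\<phi>\<in>HomLie sc br. \<forall>f :: 'k poly. poly_endo sc f \<phi> \<in> HomLie sc br))
   \<and> ((\<forall>\<phi>\<in>HomLie sc br. \<forall>f :: 'k poly. poly_endo sc f \<phi> \<in> HomLie sc br)
      \<longleftrightarrow> (\<forall>\<phi>\<in>HomLie sc br. \<forall>\<psi>\<in>HomLie sc br. \<forall>x y z.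
            (let F = (\<lambda>a b. br (\<phi> a) (\<psi> b) + br (\<psi> a) (\<phi> b))
             in br (F x y) z + br (F z x) y + br (F y z) x = 0)))"
proof -
  let ?H = "HomLie sc br"
  have two: "sc 2 (sc (1/2) v) = v" for v
    using sc_sc[OF L] sc_one[OF L] char by simp
  have half: "sc (1/2) (v + v) = v" for v
  proof -
    have "sc 2 v = v + v" using sc_ladd[OF L, of 1 1 v] by (simp add: sc_one[OF L])
    then have "v + v = sc 2 v" by simp
    then show ?thesis using sc_sc[OF L] sc_one[OF L] char by simp
  qed
  have linH: "Vector_Spaces.linear sc sc f" if "f \<in> ?H" for f
    using that unfolding HomLie_def by blast
  have addH: "f (a + b) = f a + f b" if "f \<in> ?H" for f a b
    using linH[OF that] lin_iff[OF L] by blast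
  define S where "S \<longleftrightarrow> (\<forall>\<phi>\<in>?H. \<forall>\<psi>\<in>?H. (\<lambda>x. \<phi> (\<psi> x) + \<psi> (\<phi> x)) \<in> ?H)"
  define P1 where "P1 \<longleftrightarrow> (\<forall>\<phi>\<in>?H. \<forall>\<psi>\<in>?H.
         (\<lambda>x. sc (1/2) ((\<phi> \<circ> \<psi>) x + (\<psi> \<circ> \<phi>) x)) \<in> ?H)"
  define P2 where "P2 \<longleftrightarrow> (\<forall>\<phi>\<in>?H. \<phi> \<circ> \<phi> \<in> ?H)"
  define P3 where "P3 \<longleftrightarrow> (\<forall>\<phi>\<in>?H. \<forall>f :: 'k poly. poly_endo sc f \<phi> \<in> ?H)"
  define P4 where "P4 \<longleftrightarrow> (\<forall>\<phi>\<in>?H. \<forall>\<psi>\<in>?H. \<forall>x y z.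
            (let F = (\<lambda>a b. br (\<phi> a) (\<psi> b) + br (\<psi> a) (\<phi> b))
             in br (F x y) z + br (F z x) y + br (F y z) x = 0))"
  have P1S: "P1 \<longleftrightarrow> S"
  proof
    assume P1
    show S unfolding S_def
    proof (intro ballI)
      fix \<phi> \<psi> assume a: "\<phi> \<in> ?H" "\<psi> \<in> ?H"
      have "(\<lambda>x. sc 2 (sc (1/2) ((\<phi> \<circ> \<psi>) x + (\<psi> \<circ> \<phi>) x))) \<in> ?H"
        using hl_scale[OF L, of "\<lambda>x. sc (1/2) ((\<phi> \<circ> \<psi>) x + (\<psi> \<circ> \<phi>) x)" "2"] \<open>P1\<close> a unfolding P1_def by (auto simp: comp_def)
      then show "(\<lambda>x. \<phi> (\<psi> x) + \<psi> (\<phi> x)) \<in> ?H" by (simp add: two)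
    qed
  next
    assume S
    show P1 unfolding P1_def
    proof (intro ballI)
      fix \<phi> \<psi> assume a: "\<phi> \<in> ?H" "\<psi> \<in> ?H"
      have "(\<lambda>x. sc (1/2) (\<phi> (\<psi> x) + \<psi> (\<phi> x))) \<in> ?H"
        using hl_scale[OF L, of "\<lambda>x. \<phi> (\<psi> x) + \<psi> (\<phi> x)" "1/2"] \<open>S\<close> a unfolding S_def by (auto simp: comp_def)
      then show "(\<lambda>x. sc (1/2) ((\<phi> \<circ> \<psi>) x + (\<psi> \<circ> \<phi>) x)) \<in> ?H" by simp
    qed
  qed
  have SP2: "S \<longleftrightarrow> P2"
  proof
    assume S
    show P2 unfolding P2_def
    proof
      fix \<phi> assume a: "\<phi> \<in> ?H"
      have "(\<lambda>x. sc (1/2) (\<phi> (\<phi> x) + \<phi> (\<phi> x))) \<in> ?H"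
        using hl_scale[OF L, of "\<lambda>x. \<phi> (\<phi> x) + \<phi> (\<phi> x)" "1/2"] \<open>S\<close> a unfolding S_def by (auto simp: comp_def)
      then show "\<phi> \<circ> \<phi> \<in> ?H" by (simp add: half comp_def)
    qed
  next
    assume P2
    show S unfolding S_def
    proof (intro ballI)
      fix \<phi> \<psi> assume a: "\<phi> \<in> ?H" "\<psi> \<in> ?H"
      have s: "(\<lambda>x. \<phi> x + \<psi> x) \<in> ?H" using a by (rule hl_add[OF L])
      have 1: "(\<lambda>x. \<phi> x + \<psi> x) \<circ> (\<lambda>x. \<phi> x + \<psi> x) \<in> ?H"
        using \<open>P2\<close> s unfolding P2_def by blast
      have 2: "(\<lambda>x. sc (-1) (\<phi> (\<phi> x))) \<in> ?H"
        using hl_scale[OF L, of "\<phi> \<circ> \<phi>" "-1"] \<open>P2\<close> a unfolding P2_def by (auto simp: comp_def)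
      have 3: "(\<lambda>x. sc (-1) (\<psi> (\<psi> x))) \<in> ?H"
        using hl_scale[OF L, of "\<psi> \<circ> \<psi>" "-1"] \<open>P2\<close> a unfolding P2_def by (auto simp: comp_def)
      have "(\<lambda>x. (\<lambda>x. ((\<lambda>x. \<phi> x + \<psi> x) \<circ> (\<lambda>x. \<phi> x + \<psi> x)) x + sc (-1) (\<phi> (\<phi> x))) x + sc (-1) (\<psi> (\<psi> x))) \<in> ?H"
        by (intro hl_add[OF L] 1 2 3)
      moreover have "(\<lambda>x. (\<lambda>x. ((\<lambda>x. \<phi> x + \<psi> x) \<circ> (\<lambda>x. \<phi> x + \<psi> x)) x + sc (-1) (\<phi> (\<phi> x))) x + sc (-1) (\<psi> (\<psi> x)))
          = (\<lambda>x. \<phi> (\<psi> x) + \<psi> (\<phi> x))"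
        using addH[OF a(1)] addH[OF a(2)] by (simp add: sc_m1[OF L] algebra_simps)
      ultimately show "(\<lambda>x. \<phi> (\<psi> x) + \<psi> (\<phi> x)) \<in> ?H" by simp
    qed
  qed
  have P2P3: "P2 \<longleftrightarrow> P3"
  proof
    assume P2
    then have S using SP2 by simp
    show P3 unfolding P3_def
    proof (intro ballI allI)
      fix \<phi> :: "'v \<Rightarrow> 'v" and f :: "'k poly" assume a: "\<phi> \<in> ?H"
      have pow: "(\<phi> ^^ n) \<in> ?H" for n
      proof (induction n)
        case 0
        then show ?case using hl_id[OF L] by (simp add: id_def)
      next
        case (Suc n)
        have "(\<lambda>x. sc (1/2) (\<phi> ((\<phi> ^^ n) x) + (\<phi> ^^ n) (\<phi> x))) \<in> ?H"
          using hl_scale[OF L, of "\<lambda>x. \<phi> ((\<phi> ^^ n) x) + (\<phi> ^^ n) (\<phi> x)" "1/2"] \<open>S\<close> a Suc unfolding S_def by (auto simp: comp_def)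
        moreover have "(\<lambda>x. sc (1/2) (\<phi> ((\<phi> ^^ n) x) + (\<phi> ^^ n) (\<phi> x))) = \<phi> ^^ Suc n"
          by (rule ext) (simp add: funpow_swap1 half)
        ultimately show ?case by (simp add: comp_def)
      qed
      show "poly_endo sc f \<phi> \<in> ?H" unfolding poly_endo_def
        by (intro hl_sum[OF L] hl_scale[OF L] pow) simp
    qed
  next
    assume P3
    show P2 unfolding P2_def
    proof
      fix \<phi> assume a: "\<phi> \<in> ?H"
      have "poly_endo sc (monom 1 2) \<phi> \<in> ?H" using \<open>P3\<close> a unfolding P3_def by blast
      moreover have "poly_endo sc (monom 1 2) \<phi> = \<phi> \<circ> \<phi>"
        unfolding poly_endo_def
        by (rule ext) (simp add: degree_monom_eq coeff_monom atMost_nat_numeral sc_zeroL[OF L] sc_one[OF L] numeral_2_eq_2)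
      ultimately show "\<phi> \<circ> \<phi> \<in> ?H" by simp
    qed
  qed
  have SP4: "S \<longleftrightarrow> P4"
  proof -
    have eq: "(\<lambda>x. \<phi> (\<psi> x) + \<psi> (\<phi> x)) \<in> ?H \<longleftrightarrow> (\<forall>x y z.
            (let F = (\<lambda>a b. br (\<phi> a) (\<psi> b) + br (\<psi> a) (\<phi> b))
             in br (F x y) z + br (F z x) y + br (F y z) x = 0))"
      if a: "\<phi> \<in> ?H" "\<psi> \<in> ?H" for \<phi> \<psi>
    proof -
      have lin: "Vector_Spaces.linear sc sc (\<lambda>x. \<phi> (\<psi> x) + \<psi> (\<phi> x))"
        by (rule lin_add[OF L lin_comp[OF L linH[OF a(1)] linH[OF a(2)]] lin_comp[OF L linH[OF a(2)] linH[OF a(1)]]])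
      have z1: "HC br \<phi> u v w = 0" for u v w using a(1) hl_iff[OF L] by blast
      have z2: "HC br \<psi> u v w = 0" for u v w using a(2) hl_iff[OF L] by blast
      have "(let F = (\<lambda>a b. br (\<phi> a) (\<psi> b) + br (\<psi> a) (\<phi> b))
             in br (F x y) z + br (F z x) y + br (F y z) x) = HC br (\<lambda>x. \<phi> (\<psi> x) + \<psi> (\<phi> x)) x y z" for x y z
        using key2[OF L, where p=\<phi> and q=\<psi> and x=x and y=y and z=z] by (simp add: Let_def addL[OF L] z1 z2 algebra_simps)
      then show ?thesis using lin hl_iff[OF L] by simp
    qed
    show ?thesis unfolding S_def P4_def using eq by simp
  qed
  have "(P1 \<longleftrightarrow> P2) \<and> (P2 \<longleftrightarrow> P3) \<and> (P3 \<longleftrightarrow> P4)"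
    using P1S SP2 P2P3 SP4 by blast
  then show ?thesis unfolding P1_def P2_def P3_def P4_def .
qed

end
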